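(* In the setting described in the context, let $\lambda^*$ be a minimizer of the dual function $g(\lambda)$ over $\lambda\succeq 0$ (a global optimum of the dual problem). Then $\|\lambda^*\|_2$ is upper bounded by a quantity $\lambda_{\max}$ which is $O(N^2)$ as a function of the number of channels $N$.
   Context: Setting: a source communicates with $K$ users through a single relay over $N$ channels, with user weights $w_k\ge0$, $\sum_k w_k=1$; nonnegative channel power gains $a_m$, $b_{nk}$, $c_{mk}$ ($1\le m,n\le N$, $1\le k\le K$); power limits $P_s,P_r,P_t>0$. Logarithms are base 2. Relaxed problem (P'): maximize $\sum_{m,n,k}\frac{w_k}{2}\tilde\phi_{mnk}\min\{\log(1+a_mP^s_{mnk}/\tilde\phi_{mnk}),\log(1+c_{mk}P^s_{mnk}/\tilde\phi_{mnk}+b_{nk}P^r_{mnk}/\tilde\phi_{mnk})\}$ (terms with $\tilde\phi_{mnk}=0$ are $0$) over $\tilde\phi_{mnk}\in[0,1]$ with $\sum_{n,k}\tilde\phi_{mnk}=1\ \forall m$, $\sum_{m,k}\tilde\phi_{mnk}=1\ \forall n$, and $P^s_{mnk},P^r_{mnk}\ge0$ with $\sum P^s_{mnk}\le P_s$, $\sum P^r_{mnk}\le P_r$, $\sum(P^s_{mnk}+P^r_{mnk})\le P_t$. For $\lambda=(\lambda_s,\lambda_r,\lambda_t)\succeq0$ (multipliers of the three power constraints), the dual function is $g(\lambda)=\max[\text{objective of (P')}-(\lambda_s+\lambda_t)\sum P^s_{mnk}-(\lambda_r+\lambda_t)\sum P^r_{mnk}]+\lambda_sP_s+\lambda_rP_r+\lambda_tP_t$,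 maximizing over all feasible $\tilde\phi$ and nonnegative powers. It is assumed throughout that every power constraint that is active at optimality is strictly active (remains active under small perturbations of the power limits). *)

theory Defs
  imports "HOL-Analysis.Analysis"
begin

text \<open>Indices: source channels m < N, relay channels n < N, users k < K (0-based).
  a :: nat => real (a_m), b :: nat => nat => real (b_{nk}), c :: nat => nat => real (c_{mk}).
  Allocation variables phi, Ps, Pr :: nat => nat => nat => real, indexed m n k.\<close>

definition feasible_alloc ::
  "nat \<Rightarrow> nat \<Rightarrow> (nat \<Rightarrow> nat \<Rightarrow> nat \<Rightarrow> real) \<Rightarrow> (nat \<Rightarrow> nat \<Rightarrow> nat \<Rightarrow> real)
   \<Rightarrow> (nat \<Rightarrow> nat \<Rightarrow> nat \<Rightarrow> real) \<Rightarrow> bool" where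
  "feasible_alloc N K phi Ps Pr \<longleftrightarrow>
     (\<forall>m<N. \<forall>n<N. \<forall>k<K. 0 \<le> phi m n k \<and> phi m n k \<le> 1 \<and> 0 \<le> Ps m n k \<and> 0 \<le> Pr m n k) \<and>
     (\<forall>m<N. (\<Sum>n<N. \<Sum>k<K. phi m n k) = 1) \<and>
     (\<forall>n<N. (\<Sum>m<N. \<Sum>k<K. phi m n k) = 1)"

definition rate_term ::
  "real \<Rightarrow> real \<Rightarrow> real \<Rightarrow> real \<Rightarrow> real \<Rightarrow> real \<Rightarrow> real \<Rightarrow> real" where
  "rate_term wk am bnk cmk ph ps pr =
     (if ph = 0 then 0
      else wk / 2 * ph * min (log 2 (1 + am * ps / ph))
                             (log 2 (1 + cmk * ps / ph + bnk * pr / ph)))"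

definition objective ::
  "nat \<Rightarrow> nat \<Rightarrow> (nat \<Rightarrow> real) \<Rightarrow> (nat \<Rightarrow> real) \<Rightarrow> (nat \<Rightarrow> nat \<Rightarrow> real) \<Rightarrow> (nat \<Rightarrow> nat \<Rightarrow> real)
   \<Rightarrow> (nat \<Rightarrow> nat \<Rightarrow> nat \<Rightarrow> real) \<Rightarrow> (nat \<Rightarrow> nat \<Rightarrow> nat \<Rightarrow> real) \<Rightarrow> (nat \<Rightarrow> nat \<Rightarrow> nat \<Rightarrow> real) \<Rightarrow> real" where
  "objective N K w a b c phi Ps Pr =
     (\<Sum>m<N. \<Sum>n<N. \<Sum>k<K. rate_term (w k) (a m) (b n k) (c m k) (phi m n k) (Ps m n k) (Pr m n k))"

definition total3 :: "nat \<Rightarrow> nat \<Rightarrow> (nat \<Rightarrow> nat \<Rightarrow> nat \<Rightarrow> real) \<Rightarrow> real" where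
  "total3 N K P = (\<Sum>m<N. \<Sum>n<N. \<Sum>k<K. P m n k)"

text \<open>Dual function g(lambda_s, lambda_r, lambda_t), valued in the extended reals
  (the supremum may be +infinity).\<close>
definition dual_fun ::
  "nat \<Rightarrow> nat \<Rightarrow> (nat \<Rightarrow> real) \<Rightarrow> (nat \<Rightarrow> real) \<Rightarrow> (nat \<Rightarrow> nat \<Rightarrow> real) \<Rightarrow> (nat \<Rightarrow> nat \<Rightarrow> real)
   \<Rightarrow> real \<Rightarrow> real \<Rightarrow> real \<Rightarrow> real \<Rightarrow> real \<Rightarrow> real \<Rightarrow> ereal" where
  "dual_fun N K w a b c PsL PrL PtL ls lr lt =
     (SUP x \<in> {(phi, Ps, Pr). feasible_alloc N K phi Ps Pr}.
        (case x of (phi, Ps, Pr) \<Rightarrow>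
           ereal (objective N K w a b c phi Ps Pr - (ls + lt) * total3 N K Ps - (lr + lt) * total3 N K Pr)))
     + ereal (ls * PsL + lr * PrL + lt * PtL)"

end

theory Submission
  imports Defs
begin

lemma rate_bound:
  fixes G wk am bnk cmk ph ps pr :: real
  assumes "0 \<le> wk" "wk \<le> 1" "0 \<le> am" "am \<le> G" "0 \<le> ph" "0 \<le> ps"
  shows "rate_term wk am bnk cmk ph ps pr \<le> (G / ln 2) * ps"
proof (cases "ph = 0")
  case True
  have "0 \<le> G" using assms by linarith
  then show ?thesis using True assms by (simp add: rate_term_def)
next
  case False
  hence php: "ph > 0" using assms by linarith
  define x where "x = am * ps / ph"
  have x0: "0 \<le> x" unfolding x_def using assms php by simp
  have l2: "ln (2::real) > 0" by simp
  have "log 2 (1 + x) = ln (1 + x) / ln 2" by (simp add: log_def)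
  also have "\<dots> \<le> x / ln 2" using ln_add_one_self_le_self[OF x0] l2
    by (simp add: divide_right_mono)
  finally have lx: "log 2 (1 + x) \<le> x / ln 2" .
  have c0: "0 \<le> wk / 2 * ph" using assms by simp
  have "rate_term wk am bnk cmk ph ps pr
      = wk / 2 * ph * min (log 2 (1 + x)) (log 2 (1 + cmk * ps / ph + bnk * pr / ph))"
    using False by (simp add: rate_term_def x_def)
  also have "\<dots> \<le> wk / 2 * ph * log 2 (1 + x)"
    using c0 by (intro mult_left_mono) auto
  also have "\<dots> \<le> wk / 2 * ph * (x / ln 2)"
    using c0 lx by (intro mult_left_mono) auto
  also have "\<dots> = (wk / 2) * am * ps / ln 2" using php by (simp add: x_def)
  also have "\<dots> \<le> G * ps / ln 2"
  proof -
    have "(wk / 2) * am \<le> 1 * G"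
      using assms by (intro mult_mono) auto
    hence h: "(wk / 2) * am * ps \<le> G * ps" using assms by (intro mult_right_mono) auto
    show ?thesis by (rule divide_right_mono[OF h]) (use l2 in simp)
  qed
  finally show ?thesis by simp
qed

lemma rate_zero: "rate_term wk am bnk cmk ph 0 0 = 0"
  by (simp add: rate_term_def)

lemma obj_bound:
  assumes "feasible_alloc N K phi Ps Pr" "\<forall>k<K. 0 \<le> w k \<and> w k \<le> 1"
    "\<forall>m<N. 0 \<le> a m \<and> a m \<le> G"
  shows "objective N K w a b c phi Ps Pr \<le> (G / ln 2) * total3 N K Ps"
proof -
  have "objective N K w a b c phi Ps Pr \<le> (\<Sum>m<N. \<Sum>n<N. \<Sum>k<K. (G / ln 2) * Ps m n k)"
    unfolding objective_def
    using assms unfolding feasible_alloc_def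
    by (intro sum_mono rate_bound) auto
  thus ?thesis by (simp add: total3_def sum_distrib_left)
qed

theorem lemma3:
  fixes K :: nat and w :: "nat \<Rightarrow> real" and PsL PrL PtL G :: real
  assumes "\<forall>k<K. 0 \<le> w k" and "(\<Sum>k<K. w k) = 1"
    and "PsL > 0" and "PrL > 0" and "PtL > 0" and "G \<ge> 0"
  shows "\<exists>C::real. \<forall>(N::nat) (a::nat \<Rightarrow> real) (b::nat \<Rightarrow> nat \<Rightarrow> real) (c::nat \<Rightarrow> nat \<Rightarrow> real)
           (ls::real) (lr::real) (lt::real).
           N \<ge> 1 \<longrightarrow>
           (\<forall>m<N. 0 \<le> a m \<and> a m \<le> G) \<longrightarrow>
           (\<forall>n<N. \<forall>k<K. 0 \<le> b n k \<and> b n k \<le> G) \<longrightarrow>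
           (\<forall>m<N. \<forall>k<K. 0 \<le> c m k \<and> c m k \<le> G) \<longrightarrow>
           0 \<le> ls \<longrightarrow> 0 \<le> lr \<longrightarrow> 0 \<le> lt \<longrightarrow>
           (\<forall>ls' lr' lt'. 0 \<le> ls' \<longrightarrow> 0 \<le> lr' \<longrightarrow> 0 \<le> lt' \<longrightarrow>
              dual_fun N K w a b c PsL PrL PtL ls lr lt \<le> dual_fun N K w a b c PsL PrL PtL ls' lr' lt') \<longrightarrow>
           sqrt (ls\<^sup>2 + lr\<^sup>2 + lt\<^sup>2) \<le> C * (real N)\<^sup>2"
proof -
  define B where "B = (G / ln 2) * PsL"
  have B0: "0 \<le> B" using assms by (simp add: B_def)
  have Kpos: "0 < K" using assms(2) by (cases K) auto
  have w1: "\<forall>k<K. 0 \<le> w k \<and> w k \<le> 1"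
  proof (intro allI impI conjI)
    fix k assume k: "k < K"
    show "0 \<le> w k" using assms(1) k by auto
    have "w k \<le> (\<Sum>k<K. w k)"
      by (rule member_le_sum) (use assms(1) k in auto)
    thus "w k \<le> 1" using assms(2) by simp
  qed
  define C where "C = B / PsL + B / PrL + B / PtL"
  show ?thesis
  proof (rule exI[of _ C], intro allI impI)
    fix N :: nat and a :: "nat \<Rightarrow> real" and b c :: "nat \<Rightarrow> nat \<Rightarrow> real" and ls lr lt :: real
    assume N1: "N \<ge> 1" and ha: "\<forall>m<N. 0 \<le> a m \<and> a m \<le> G"
      and l0: "0 \<le> ls" "0 \<le> lr" "0 \<le> lt"
      and opt: "\<forall>ls' lr' lt'. 0 \<le> ls' \<longrightarrow> 0 \<le> lr' \<longrightarrow> 0 \<le> lt' \<longrightarrow>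
              dual_fun N K w a b c PsL PrL PtL ls lr lt \<le> dual_fun N K w a b c PsL PrL PtL ls' lr' lt'"
    let ?S = "{(phi, Ps, Pr). feasible_alloc N K phi Ps Pr}"
    define f where "f = (\<lambda>ls lr lt x. case x of (phi, Ps, Pr) \<Rightarrow>
           ereal (objective N K w a b c phi Ps Pr - (ls + lt) * total3 N K Ps - (lr + lt) * total3 N K Pr))"
    have dfe: "dual_fun N K w a b c PsL PrL PtL ls' lr' lt' =
         (SUP x \<in> ?S. f ls' lr' lt' x) + ereal (ls' * PsL + lr' * PrL + lt' * PtL)" for ls' lr' lt'
      unfolding dual_fun_def f_def by simp
    define phi0 :: "nat \<Rightarrow> nat \<Rightarrow> nat \<Rightarrow> real" where
      "phi0 = (\<lambda>m n k. if n = m \<and> k = 0 then 1 else 0)"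
    define Z :: "nat \<Rightarrow> nat \<Rightarrow> nat \<Rightarrow> real" where "Z = (\<lambda>m n k. 0)"
    have fe: "feasible_alloc N K phi0 Z Z"
    proof -
      have r1: "(\<Sum>n<N. \<Sum>k<K. phi0 m n k) = 1" if "m < N" for m
      proof -
        have "(\<Sum>n<N. \<Sum>k<K. phi0 m n k) = (\<Sum>n<N. if n = m then 1 else 0)"
          using Kpos by (intro sum.cong) (auto simp: phi0_def sum.delta)
        thus ?thesis using that by (simp add: sum.delta)
      qed
      have r2: "(\<Sum>m<N. \<Sum>k<K. phi0 m n k) = 1" if "n < N" for n
      proof -
        have "(\<Sum>m<N. \<Sum>k<K. phi0 m n k) = (\<Sum>m<N. if n = m then 1 else 0)"
          using Kpos by (intro sum.cong) (auto simp: phi0_def sum.delta)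
        thus ?thesis using that by (simp add: sum.delta)
      qed
      show ?thesis unfolding feasible_alloc_def using r1 r2 by (auto simp: phi0_def Z_def)
    qed
    have f0: "f ls lr lt (phi0, Z, Z) = ereal 0"
      unfolding f_def objective_def total3_def Z_def by (simp add: rate_zero)
    have lower: "ereal (ls * PsL + lr * PrL + lt * PtL) \<le> dual_fun N K w a b c PsL PrL PtL ls lr lt"
    proof -
      have "0 \<le> (SUP x \<in> ?S. f ls lr lt x)"
        using fe f0 zero_ereal_def by (metis (mono_tags, lifting) SUP_upper case_prodI mem_Collect_eq)
      hence "0 + ereal (ls * PsL + lr * PrL + lt * PtL) \<le> (SUP x \<in> ?S. f ls lr lt x) + ereal (ls * PsL + lr * PrL + lt * PtL)"
        by (intro add_right_mono) simp
      thus ?thesis using dfe by simp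
    qed
    have upper: "dual_fun N K w a b c PsL PrL PtL (G / ln 2) 0 0 \<le> ereal B"
    proof -
      have "(SUP x \<in> ?S. f (G / ln 2) 0 0 x) \<le> 0"
      proof (rule SUP_least)
        fix x assume "x \<in> ?S"
        then obtain phi Ps Pr where x: "x = (phi, Ps, Pr)" "feasible_alloc N K phi Ps Pr" by auto
        have tPr: "0 \<le> total3 N K Pr" using x(2) unfolding total3_def feasible_alloc_def
          by (intro sum_nonneg) auto
        have "objective N K w a b c phi Ps Pr \<le> (G / ln 2) * total3 N K Ps"
          by (rule obj_bound[OF x(2) w1 ha])
        thus "f (G / ln 2) 0 0 x \<le> 0" using x(1) tPr by (simp add: f_def)
      qed
      hence "(SUP x \<in> ?S. f (G / ln 2) 0 0 x) + ereal ((G / ln 2) * PsL) \<le> 0 + ereal B"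
        unfolding B_def by (intro add_right_mono) auto
      thus ?thesis using dfe by simp
    qed
    have Gl: "0 \<le> G / ln 2" using assms by simp
    have "ereal (ls * PsL + lr * PrL + lt * PtL) \<le> ereal B"
      using lower opt upper Gl by (meson order_trans order_refl)
    hence sB: "ls * PsL + lr * PrL + lt * PtL \<le> B" by simp
    have p: "0 \<le> ls * PsL" "0 \<le> lr * PrL" "0 \<le> lt * PtL" using l0 assms by auto
    have "ls * PsL \<le> B" using sB p by linarith
    hence b1: "ls \<le> B / PsL" using assms by (simp add: pos_le_divide_eq)
    have "lr * PrL \<le> B" using sB p by linarith
    hence b2: "lr \<le> B / PrL" using assms by (simp add: pos_le_divide_eq)
    have "lt * PtL \<le> B" using sB p by linarith
    hence b3: "lt \<le> B / PtL" using assms by (simp add: pos_le_divide_eq)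
    have "sqrt (ls\<^sup>2 + lr\<^sup>2 + lt\<^sup>2) \<le> ls + lr + lt"
    proof (rule real_le_lsqrt)
      show "0 \<le> ls + lr + lt" using l0 by simp
      show "ls\<^sup>2 + lr\<^sup>2 + lt\<^sup>2 \<le> (ls + lr + lt)\<^sup>2" using l0 by (simp add: power2_eq_square algebra_simps)
    qed
    also have "\<dots> \<le> C" using b1 b2 b3 by (simp add: C_def)
    also have "\<dots> \<le> C * (real N)\<^sup>2"
    proof -
      have "0 \<le> C" using B0 assms by (simp add: C_def)
      moreover have "1 \<le> (real N)\<^sup>2" using N1 by (simp add: one_le_power)
      ultimately show ?thesis by (metis mult.right_neutral mult_left_mono)
    qed
    finally show "sqrt (ls\<^sup>2 + lr\<^sup>2 + lt\<^sup>2) \<le> C * (real N)\<^sup>2" .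
  qed
qed

end
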